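(* Let $\Bbbk$ be a field of characteristic $2$, $G=\langle\sigma\rangle$ cyclic of order $4$ acting on $V=V_3$ with $\sigma x_1=x_1+x_2$, $\sigma x_2=x_2+x_3$, $\sigma x_3=x_3$ on the dual basis, and $A=\Bbbk[N^G(x_1),\ x_2(x_2+x_3),\ x_3]$ with $N^G(x_1)=\prod_{i=0}^3\sigma^i(x_1)$. Then $K_3=\ker(\Delta^3:\Bbbk[V]\to\Bbbk[V])$ is a free $A$-module with basis $\{1,\ x_1,\ x_2,\ x_1^2,\ \Delta(x_1^3),\ \Delta(x_1^3x_2)\}$.
   Context: $\Delta=\sigma-\iota\in\Bbbk G$ acting on $\Bbbk[V]=\Bbbk[x_1,x_2,x_3]$. *)

theory Defs
  imports "HOL-Computational_Algebra.Polynomial"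
begin

text \<open>The polynomial ring k[x1,x2,x3] is represented as the iterated
univariate ring ((k[x3])[x2])[x1], i.e. the type 'k poly poly poly.\<close>

type_synonym 'k mpoly3 = "'k poly poly poly"

definition x1 :: "'k::field mpoly3" where "x1 = [:0, 1:]"
definition x2 :: "'k::field mpoly3" where "x2 = [:[:0, 1:]:]"
definition x3 :: "'k::field mpoly3" where "x3 = [:[:[:0, 1:]:]:]"

definition const3 :: "'k::field \<Rightarrow> 'k mpoly3" where
  "const3 c = [:[:[:c:]:]:]"

text \<open>On k[x3][x2]: the substitution x2 \<mapsto> x2 + x3, x3 \<mapsto> x3.\<close>
definition sigma2 :: "'k::field poly poly \<Rightarrow> 'k poly poly" where
  "sigma2 g = poly (map_poly (\<lambda>c. [:c:]) g) ([:0, 1:] + [:[:0, 1:]:])"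

text \<open>The k-algebra automorphism sigma of k[x1,x2,x3] with
  sigma x1 = x1 + x2, sigma x2 = x2 + x3, sigma x3 = x3.\<close>
definition sigma :: "'k::field mpoly3 \<Rightarrow> 'k mpoly3" where
  "sigma f = poly (map_poly (\<lambda>c. [:sigma2 c:]) f) (x1 + x2)"

definition Delta :: "'k::field mpoly3 \<Rightarrow> 'k mpoly3" where
  "Delta f = sigma f - f"

definition normx1 :: "'k::field mpoly3" where
  "normx1 = (\<Prod>i<4. (sigma ^^ i) x1)"

inductive_set subalg :: "'k::field mpoly3 set \<Rightarrow> 'k mpoly3 set" for S where
  const: "const3 c \<in> subalg S"
| gen: "s \<in> S \<Longrightarrow> s \<in> subalg S"
| add: "a \<in> subalg S \<Longrightarrow> b \<in> subalg S \<Longrightarrow> a + b \<in> subalg S"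
| mult: "a \<in> subalg S \<Longrightarrow> b \<in> subalg S \<Longrightarrow> a * b \<in> subalg S"

definition Aalg :: "'k::field mpoly3 set" where
  "Aalg = subalg {normx1, x2 * (x2 + x3), x3}"

definition K3 :: "'k::field mpoly3 set" where
  "K3 = {f. (Delta ^^ 3) f = 0}"

definition free_with_basis :: "'a::comm_ring_1 set \<Rightarrow> 'a set \<Rightarrow> 'a list \<Rightarrow> bool" where
  "free_with_basis R M bs \<longleftrightarrow>
     M = {\<Sum>i<length bs. a i * bs ! i | a. \<forall>i<length bs. a i \<in> R}
   \<and> (\<forall>a. (\<forall>i<length bs. a i \<in> R) \<and> (\<Sum>i<length bs. a i * bs ! i) = 0
          \<longrightarrow> (\<forall>i<length bs. a i = 0))"

end

theory Submission
  imports Defs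
begin

lemma map_poly_add_hom:
  assumes "f 0 = 0" "\<And>a b. f (a+b) = f a + f b"
  shows "map_poly f (p+q) = map_poly f p + map_poly f q"
  by (intro poly_eqI) (simp add: coeff_map_poly assms)

lemma map_poly_mult_hom:
  fixes f :: "'a::comm_semiring_0 \<Rightarrow> 'b::comm_semiring_0"
  assumes "f 0 = 0" "\<And>a b. f (a+b) = f a + f b" "\<And>a b. f (a*b) = f a * f b"
  shows "map_poly f (p*q) = map_poly f p * map_poly f q"
proof (induct p)
  case 0 show ?case by simp
next
  case (pCons a p)
  show ?case by (simp add: map_poly_add_hom[OF assms(1,2)] map_poly_smult[OF assms(1,3)]
       map_poly_pCons[where f=f, OF assms(1)] pCons(2) assms(1))
qed

definition Y2 :: "'k::field poly poly" where "Y2 = [:0, 1:] + [:[:0, 1:]:]"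

lemma sigma2_alt: "sigma2 g = pcompose g Y2"
  by (simp add: sigma2_def pcompose_altdef Y2_def)

lemma sigma2_add: "sigma2 (a + b) = sigma2 a + sigma2 b"
  by (simp add: sigma2_alt pcompose_add)
lemma sigma2_mult: "sigma2 (a * b) = sigma2 a * sigma2 b"
  by (simp add: sigma2_alt pcompose_mult)
lemma sigma2_0: "sigma2 0 = 0"
  by (simp add: sigma2_alt)
lemma sigma2_1: "sigma2 1 = 1"
  by (simp add: sigma2_alt pcompose_1)

lemma sigma_alt: "sigma f = pcompose (map_poly sigma2 f) (x1 + x2)"
  by (simp add: sigma_def pcompose_altdef map_poly_map_poly sigma2_0 o_def)

lemma map_sigma2_pCons[simp]: "map_poly sigma2 (pCons a p) = pCons (sigma2 a) (map_poly sigma2 p)"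
  by (simp add: map_poly_pCons sigma2_0)

lemma map_sigma2_add: "map_poly sigma2 (p + q) = map_poly sigma2 p + map_poly sigma2 q"
  by (rule map_poly_add_hom) (simp_all add: sigma2_0 sigma2_add)
lemma map_sigma2_mult: "map_poly sigma2 (p * q) = map_poly sigma2 p * map_poly sigma2 q"
  by (rule map_poly_mult_hom) (simp_all add: sigma2_0 sigma2_add sigma2_mult)

lemma sigma_add: "sigma (a + b) = sigma a + sigma b"
  by (simp add: sigma_alt map_sigma2_add pcompose_add)
lemma sigma_mult: "sigma (a * b) = sigma a * sigma b"
  by (simp add: sigma_alt map_sigma2_mult pcompose_mult)
lemma sigma_0: "sigma 0 = 0"
  by (simp add: sigma_alt)
lemma sigma_1: "sigma 1 = 1"
  by (simp add: sigma_alt sigma2_1 pcompose_1)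
lemma sigma_uminus: "sigma (- a) = - sigma a"
  using sigma_add[of a "-a"] by (simp add: sigma_0) (metis add.commute eq_neg_iff_add_eq_0)
lemma sigma_diff: "sigma (a - b) = sigma a - sigma b"
  using sigma_add[of a "-b"] by (simp add: sigma_uminus)
lemma sigma_power: "sigma (a ^ n) = sigma a ^ n"
  by (induct n) (simp_all add: sigma_1 sigma_mult)

lemma sigma_x1: "sigma x1 = x1 + x2"
  by (simp add: sigma_alt x1_def sigma2_0 sigma2_1 pcompose_pCons map_poly_pCons)
lemma sigma_x2: "sigma x2 = x2 + x3"
  by (simp add: sigma_alt x2_def x3_def sigma2_alt Y2_def pcompose_pCons)
lemma sigma_x3: "sigma x3 = x3"
  by (simp add: sigma_alt x3_def sigma2_alt pcompose_pCons)
lemma sigma_const: "sigma (const3 c) = const3 c"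
  by (simp add: sigma_alt const3_def sigma2_alt)


definition qq :: "'k::field mpoly3" where "qq = x2 * (x2 + x3)"

lemma two_zero:
  assumes "CHAR('k::field) = 2"
  shows "(2::'k mpoly3) = 0"
proof -
  have "(of_nat 2 :: 'k) = 0" using of_nat_CHAR[where 'a='k] assms by simp
  then have "(of_nat 2 :: 'k mpoly3) = 0" by (simp add: of_nat_poly)
  then show ?thesis by simp
qed

lemma char2_eq: "(2::'a::comm_ring_1) = 0 \<Longrightarrow> (a::'a) = b + 2 * c \<Longrightarrow> a = b"
  by simp

lemma T_formula: "(Delta ^^ 3) f = sigma (sigma (sigma f)) - 3 * sigma (sigma f) + 3 * sigma f - f"
proof -
  have "(Delta ^^ 3) f = Delta (Delta (Delta f))" by (simp add: eval_nat_numeral)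
  also have "\<dots> = sigma (sigma (sigma f)) - 3 * sigma (sigma f) + 3 * sigma f - f"
    unfolding Delta_def sigma_diff by algebra
  finally show ?thesis .
qed

lemma T_mon: "(Delta ^^ 3) (x1^a * x2^b) = (x1 + x2 + (x2 + x3) + (x2 + x3 + x3))^a * (x2 + x3 + x3 + x3)^b - 3 * ((x1 + x2 + (x2 + x3))^a * (x2 + x3 + x3)^b) + 3 * ((x1 + x2)^a * (x2 + x3)^b) - x1^a * x2^b"
  by (simp only: T_formula sigma_mult sigma_power sigma_add sigma_x1 sigma_x2 sigma_x3)

lemma T_1:
  assumes "CHAR('k::field) = 2"
  shows "(Delta ^^ 3) (1 :: 'k mpoly3) = 0"
proof -
  have "(Delta ^^ 3) (1 :: 'k mpoly3) = (Delta ^^ 3) (x1^0 * x2^0)" by simp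
  also have "\<dots> = 0"
    apply (simp only: T_mon qq_def)
    apply (rule char2_eq[OF two_zero[OF assms], where c = "0"])
    by algebra
  finally show ?thesis .
qed

lemma T_x1:
  assumes "CHAR('k::field) = 2"
  shows "(Delta ^^ 3) (x1 :: 'k mpoly3) = 0"
proof -
  have "(Delta ^^ 3) (x1 :: 'k mpoly3) = (Delta ^^ 3) (x1^1 * x2^0)" by simp
  also have "\<dots> = 0"
    apply (simp only: T_mon qq_def)
    apply (rule char2_eq[OF two_zero[OF assms], where c = "0"])
    by algebra
  finally show ?thesis .
qed

lemma T_x2:
  assumes "CHAR('k::field) = 2"
  shows "(Delta ^^ 3) (x2 :: 'k mpoly3) = 0"
proof -
  have "(Delta ^^ 3) (x2 :: 'k mpoly3) = (Delta ^^ 3) (x1^0 * x2^1)" by simp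
  also have "\<dots> = 0"
    apply (simp only: T_mon qq_def)
    apply (rule char2_eq[OF two_zero[OF assms], where c = "0"])
    by algebra
  finally show ?thesis .
qed

lemma T_x1sq:
  assumes "CHAR('k::field) = 2"
  shows "(Delta ^^ 3) (x1^2 :: 'k mpoly3) = 0"
proof -
  have "(Delta ^^ 3) (x1^2 :: 'k mpoly3) = (Delta ^^ 3) (x1^2 * x2^0)" by simp
  also have "\<dots> = 0"
    apply (simp only: T_mon qq_def)
    apply (rule char2_eq[OF two_zero[OF assms], where c = "3*x2*x3 + 3*x3^2"])
    by algebra
  finally show ?thesis .
qed

lemma T_x1x2:
  assumes "CHAR('k::field) = 2"
  shows "(Delta ^^ 3) (x1 * x2 :: 'k mpoly3) = x3^2"
proof -
  have "(Delta ^^ 3) (x1 * x2 :: 'k mpoly3) = (Delta ^^ 3) (x1^1 * x2^1)" by simp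
  also have "\<dots> = x3^2"
    apply (simp only: T_mon qq_def)
    apply (rule char2_eq[OF two_zero[OF assms], where c = "1*x3^2"])
    by algebra
  finally show ?thesis .
qed

lemma T_x1sqx2:
  assumes "CHAR('k::field) = 2"
  shows "(Delta ^^ 3) (x1^2 * x2 :: 'k mpoly3) = x3^3"
proof -
  have "(Delta ^^ 3) (x1^2 * x2 :: 'k mpoly3) = (Delta ^^ 3) (x1^2 * x2^1)" by simp
  also have "\<dots> = x3^3"
    apply (simp only: T_mon qq_def)
    apply (rule char2_eq[OF two_zero[OF assms], where c = "3*x1*x3^2 + 18*x2*x3^2 + 6*x2^2*x3 + 10*x3^3"])
    by algebra
  finally show ?thesis .
qed

lemma T_x1cu:
  assumes "CHAR('k::field) = 2"
  shows "(Delta ^^ 3) (x1^3 :: 'k mpoly3) = qq * x3"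
proof -
  have "(Delta ^^ 3) (x1^3 :: 'k mpoly3) = (Delta ^^ 3) (x1^3 * x2^0)" by simp
  also have "\<dots> = qq * x3"
    apply (simp only: T_mon qq_def)
    apply (rule char2_eq[OF two_zero[OF assms], where c = "9*x1*x2*x3 + 9*x1*x3^2 + 31*x2*x3^2 + 22*x2^2*x3 + 3*x2^3 + 12*x3^3"])
    by algebra
  finally show ?thesis .
qed

lemma T_x1cux2:
  assumes "CHAR('k::field) = 2"
  shows "(Delta ^^ 3) (x1^3 * x2 :: 'k mpoly3) = x3^4 + qq * x3^2 + (qq * x3) * x2 + x3^2 * x1^2 + x3^3 * x1"
proof -
  have "(Delta ^^ 3) (x1^3 * x2 :: 'k mpoly3) = (Delta ^^ 3) (x1^3 * x2^1)" by simp
  also have "\<dots> = x3^4 + qq * x3^2 + (qq * x3) * x2 + x3^2 * x1^2 + x3^3 * x1"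
    apply (simp only: T_mon qq_def)
    apply (rule char2_eq[OF two_zero[OF assms], where c = "54*x1*x2*x3^2 + 18*x1*x2^2*x3 + 31*x1*x3^3 + 4*x1^2*x3^2 + 115*x2*x3^3 + 116*x2^2*x3^2 + 40*x2^3*x3 + 3*x2^4 + 37*x3^4"])
    by algebra
  finally show ?thesis .
qed



lemma N_prod: "normx1 = x1 * (x1 + x2) * (x1 + x2 + (x2 + x3)) * (x1 + x2 + (x2 + x3) + (x2 + x3 + x3))"
proof -
  have "normx1 = x1 * sigma x1 * sigma (sigma x1) * sigma (sigma (sigma (x1 :: 'a mpoly3)))"
    by (simp add: normx1_def eval_nat_numeral mult_ac)
  then show ?thesis by (simp only: sigma_add sigma_x1 sigma_x2 sigma_x3)
qed

lemma N_expl: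
  assumes "CHAR('k::field) = 2"
  shows "(normx1 :: 'k mpoly3) = x1^4 + (qq + x3^2) * x1^2 + (x3 * qq) * x1"
  apply (simp only: N_prod qq_def)
  apply (rule char2_eq[OF two_zero[OF assms], where c = "1*x1*x2*x3^2 + 4*x1*x2^2*x3 + 3*x1*x2^3 + 6*x1^2*x2*x3 + 5*x1^2*x2^2 + 1*x1^2*x3^2 + 3*x1^3*x2 + 2*x1^3*x3"])
  by algebra

lemma sigma_qq_raw: "sigma qq = (x2 + x3) * (x2 + x3 + x3)"
  by (simp add: qq_def sigma_mult sigma_add sigma_x2 sigma_x3)

lemma sigma_qq:
  assumes "CHAR('k::field) = 2"
  shows "sigma (qq :: 'k mpoly3) = qq"
  apply (subst sigma_qq_raw, simp only: qq_def)
  apply (rule char2_eq[OF two_zero[OF assms], where c = "1*x2*x3 + 1*x3^2"])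
  by algebra

lemma sigma_N:
  assumes "CHAR('k::field) = 2"
  shows "sigma (normx1 :: 'k mpoly3) = normx1"
proof -
  have "sigma (normx1 :: 'k mpoly3) = sigma (x1^4 + (qq + x3^2) * x1^2 + (x3 * qq) * x1)" by (simp only: N_expl[OF assms])
  also have "\<dots> = (x1 + x2)^4 + ((x2 + x3) * (x2 + x3 + x3) + x3^2) * (x1 + x2)^2 + (x3 * ((x2 + x3) * (x2 + x3 + x3))) * (x1 + x2)"
    by (simp only: sigma_add sigma_mult sigma_power sigma_x1 sigma_x2 sigma_x3 sigma_qq_raw)
  also have "\<dots> = x1^4 + (qq + x3^2) * x1^2 + (x3 * qq) * x1"
    apply (simp only: qq_def)
    apply (rule char2_eq[OF two_zero[OF assms], where c = "4*x1*x2*x3^2 + 3*x1*x2^2*x3 + 3*x1*x2^3 + 1*x1*x3^3 + 1*x1^2*x2*x3 + 3*x1^2*x2^2 + 1*x1^2*x3^2 + 2*x1^3*x2 + 1*x2*x3^3 + 3*x2^2*x3^2 + 2*x2^3*x3 + 1*x2^4"])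
    by algebra
  also have "\<dots> = normx1" by (simp only: N_expl[OF assms])
  finally show ?thesis .
qed

lemma D3_expl:
  assumes "CHAR('k::field) = 2"
  shows "Delta (x1^3 :: 'k mpoly3) = x1^2 * x2 + x3 * (x1 * x2) + qq * x1 + (x3^2 + qq) * x2 + qq * x3"
  apply (simp only: Delta_def sigma_power sigma_x1 qq_def)
  apply (rule char2_eq[OF two_zero[OF assms], where c = "(- 1)*x1*x2*x3 + 1*x1*x2^2 + 1*x1^2*x2 + (- 1)*x2*x3^2 + (- 1)*x2^2*x3"])
  by algebra

lemma D4_expl:
  assumes "CHAR('k::field) = 2"
  shows "Delta (x1^3 * x2 :: 'k mpoly3) = qq * (x1 * x2) + qq * x1^2 + (qq * x3) * x2 + qq^2 + x3 * x1^3"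
  apply (simp only: Delta_def sigma_power sigma_mult sigma_x1 sigma_x2 qq_def)
  apply (rule char2_eq[OF two_zero[OF assms], where c = "1*x1*x2^2*x3 + 1*x1*x2^3 + 1*x1^2*x2*x3 + 1*x1^2*x2^2 + (- 1)*x2^2*x3^2 + (- 1)*x2^3*x3"])
  by algebra

lemma Aalg_const: "const3 c \<in> Aalg"
  unfolding Aalg_def by (rule subalg.const)
lemma Aalg_add: "a \<in> Aalg \<Longrightarrow> b \<in> Aalg \<Longrightarrow> a + b \<in> Aalg"
  unfolding Aalg_def by (rule subalg.add)
lemma Aalg_mult: "a \<in> Aalg \<Longrightarrow> b \<in> Aalg \<Longrightarrow> a * b \<in> Aalg"
  unfolding Aalg_def by (rule subalg.mult)
lemma Aalg_N: "normx1 \<in> Aalg"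
  unfolding Aalg_def by (rule subalg.gen) simp
lemma Aalg_qq: "qq \<in> Aalg"
  unfolding Aalg_def qq_def by (rule subalg.gen) simp
lemma Aalg_x3: "x3 \<in> Aalg"
  unfolding Aalg_def by (rule subalg.gen) simp
lemma Aalg_1: "1 \<in> Aalg"
  using Aalg_const[of 1] by (simp add: const3_def pCons_one)
lemma Aalg_0: "0 \<in> Aalg"
  using Aalg_const[of 0] by (simp add: const3_def)
lemma Aalg_uminus: assumes "a \<in> Aalg" shows "- a \<in> Aalg"
proof -
  have "const3 (-1) = (-1 :: 'a mpoly3)" by (simp add: const3_def one_pCons)
  then show ?thesis using Aalg_mult[OF Aalg_const[of "-1"] assms] by simp
qed
lemma Aalg_diff: "a \<in> Aalg \<Longrightarrow> b \<in> Aalg \<Longrightarrow> a - b \<in> Aalg"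
  using Aalg_add[OF _ Aalg_uminus, of a b] by simp
lemma Aalg_power: "a \<in> Aalg \<Longrightarrow> a ^ n \<in> Aalg"
  by (induct n) (simp_all add: Aalg_1 Aalg_mult)

lemma sigma_fix:
  assumes "CHAR('k::field) = 2" and "(a :: 'k mpoly3) \<in> Aalg"
  shows "sigma a = a"
  using assms(2) unfolding Aalg_def
proof (induct rule: subalg.induct)
  case (const c) then show ?case by (rule sigma_const)
next
  case (gen s) then show ?case
    using sigma_N[OF assms(1)] sigma_qq[OF assms(1)] sigma_x3 by (auto simp: qq_def)
next
  case (add a b) then show ?case by (simp add: sigma_add)
next
  case (mult a b) then show ?case by (simp add: sigma_mult)
qed


lemma Delta_add: "Delta (a + b) = Delta a + Delta b"
  by (simp add: Delta_def sigma_add)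
lemma Delta_cmult: "sigma c = c \<Longrightarrow> Delta (c * f) = c * Delta f"
  by (simp add: Delta_def sigma_mult algebra_simps)
lemma T_add: "(Delta ^^ 3) (a + b) = (Delta ^^ 3) a + (Delta ^^ 3) b"
  by (simp add: eval_nat_numeral Delta_add)
lemma T_cmult: "sigma c = c \<Longrightarrow> (Delta ^^ 3) (c * f) = c * (Delta ^^ 3) f"
  by (simp add: eval_nat_numeral Delta_cmult)

definition rep :: "'k::field mpoly3 \<Rightarrow> 'k mpoly3 \<Rightarrow> 'k mpoly3 \<Rightarrow> 'k mpoly3 \<Rightarrow> 'k mpoly3 \<Rightarrow> 'k mpoly3 \<Rightarrow> 'k mpoly3 \<Rightarrow> 'k mpoly3 \<Rightarrow> 'k mpoly3" where
  "rep c0 c1 c2 c3 d0 d1 d2 d3 = c0 + c1 * x1 + c2 * x1^2 + c3 * x1^3 + d0 * x2 + d1 * (x1 * x2) + d2 * (x1^2 * x2) + d3 * (x1^3 * x2)"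

definition inM :: "'k::field mpoly3 \<Rightarrow> bool" where
  "inM f \<longleftrightarrow> (\<exists>c0 c1 c2 c3 d0 d1 d2 d3. c0 \<in> Aalg \<and> c1 \<in> Aalg \<and> c2 \<in> Aalg \<and> c3 \<in> Aalg \<and>
      d0 \<in> Aalg \<and> d1 \<in> Aalg \<and> d2 \<in> Aalg \<and> d3 \<in> Aalg \<and> f = rep c0 c1 c2 c3 d0 d1 d2 d3)"

lemma inM_intro:
  assumes "c0 \<in> Aalg" "c1 \<in> Aalg" "c2 \<in> Aalg" "c3 \<in> Aalg"
      "d0 \<in> Aalg" "d1 \<in> Aalg" "d2 \<in> Aalg" "d3 \<in> Aalg" "f = rep c0 c1 c2 c3 d0 d1 d2 d3"
  shows "inM f"
  unfolding inM_def
  apply (rule exI[of _ c0], rule exI[of _ c1], rule exI[of _ c2], rule exI[of _ c3])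
  apply (rule exI[of _ d0], rule exI[of _ d1], rule exI[of _ d2], rule exI[of _ d3])
  using assms by simp

lemma inM_E:
  assumes "inM f"
  obtains c0 c1 c2 c3 d0 d1 d2 d3 where "c0 \<in> Aalg" "c1 \<in> Aalg" "c2 \<in> Aalg" "c3 \<in> Aalg"
      "d0 \<in> Aalg" "d1 \<in> Aalg" "d2 \<in> Aalg" "d3 \<in> Aalg" "f = rep c0 c1 c2 c3 d0 d1 d2 d3"
  using assms unfolding inM_def
  apply (elim exE conjE)
  subgoal for c0 c1 c2 c3 d0 d1 d2 d3 by (rule that[of c0 c1 c2 c3 d0 d1 d2 d3])
  done

lemma inM_0: "inM 0"
  by (rule inM_intro[OF Aalg_0 Aalg_0 Aalg_0 Aalg_0 Aalg_0 Aalg_0 Aalg_0 Aalg_0]) (simp add: rep_def)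

lemma inM_1: "inM 1"
  by (rule inM_intro[OF Aalg_1 Aalg_0 Aalg_0 Aalg_0 Aalg_0 Aalg_0 Aalg_0 Aalg_0]) (simp add: rep_def)

lemma inM_add:
  assumes "inM f" "inM g" shows "inM (f + g)"
proof -
  from assms(1) obtain c0 c1 c2 c3 d0 d1 d2 d3 where A: "c0 \<in> Aalg" "c1 \<in> Aalg" "c2 \<in> Aalg" "c3 \<in> Aalg"
      "d0 \<in> Aalg" "d1 \<in> Aalg" "d2 \<in> Aalg" "d3 \<in> Aalg" and f: "f = rep c0 c1 c2 c3 d0 d1 d2 d3"
    by (rule inM_E)
  from assms(2) obtain e0 e1 e2 e3 g0 g1 g2 g3 where B: "e0 \<in> Aalg" "e1 \<in> Aalg" "e2 \<in> Aalg" "e3 \<in> Aalg"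
      "g0 \<in> Aalg" "g1 \<in> Aalg" "g2 \<in> Aalg" "g3 \<in> Aalg" and g: "g = rep e0 e1 e2 e3 g0 g1 g2 g3"
    by (rule inM_E)
  have "f + g = rep (c0+e0) (c1+e1) (c2+e2) (c3+e3) (d0+g0) (d1+g1) (d2+g2) (d3+g3)"
    unfolding f g rep_def by (simp add: algebra_simps power2_eq_square power3_eq_cube power4_eq_xxxx)
  then show ?thesis by (rule inM_intro[rotated 8]) (use A B in \<open>auto intro: Aalg_add\<close>)
qed

lemma inM_smul:
  assumes "a \<in> Aalg" "inM f" shows "inM (a * f)"
proof -
  from assms(2) obtain c0 c1 c2 c3 d0 d1 d2 d3 where A: "c0 \<in> Aalg" "c1 \<in> Aalg" "c2 \<in> Aalg" "c3 \<in> Aalg"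
      "d0 \<in> Aalg" "d1 \<in> Aalg" "d2 \<in> Aalg" "d3 \<in> Aalg" and f: "f = rep c0 c1 c2 c3 d0 d1 d2 d3"
    by (rule inM_E)
  have "a * f = rep (a*c0) (a*c1) (a*c2) (a*c3) (a*d0) (a*d1) (a*d2) (a*d3)"
    unfolding f rep_def by (simp add: algebra_simps power2_eq_square power3_eq_cube power4_eq_xxxx)
  then show ?thesis by (rule inM_intro[rotated 8]) (use A assms(1) in \<open>auto intro: Aalg_mult\<close>)
qed

lemma inM_x2:
  assumes "inM f" shows "inM (x2 * f)"
proof -
  from assms obtain c0 c1 c2 c3 d0 d1 d2 d3 where A: "c0 \<in> Aalg" "c1 \<in> Aalg" "c2 \<in> Aalg" "c3 \<in> Aalg"
      "d0 \<in> Aalg" "d1 \<in> Aalg" "d2 \<in> Aalg" "d3 \<in> Aalg" and f: "f = rep c0 c1 c2 c3 d0 d1 d2 d3"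
    by (rule inM_E)
  have e: "x2 * f = rep (qq*d0) (qq*d1) (qq*d2) (qq*d3) (c0 - x3*d0) (c1 - x3*d1) (c2 - x3*d2) (c3 - x3*d3)"
    unfolding f rep_def qq_def by (simp add: algebra_simps power2_eq_square power3_eq_cube power4_eq_xxxx)
  show ?thesis
    by (rule inM_intro[OF Aalg_mult[OF Aalg_qq A(5)] Aalg_mult[OF Aalg_qq A(6)] Aalg_mult[OF Aalg_qq A(7)]
      Aalg_mult[OF Aalg_qq A(8)] Aalg_diff[OF A(1) Aalg_mult[OF Aalg_x3 A(5)]] Aalg_diff[OF A(2) Aalg_mult[OF Aalg_x3 A(6)]]
      Aalg_diff[OF A(3) Aalg_mult[OF Aalg_x3 A(7)]] Aalg_diff[OF A(4) Aalg_mult[OF Aalg_x3 A(8)]] e])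
qed

lemma inM_x1:
  assumes ch: "CHAR('k::field) = 2" and "inM (f :: 'k mpoly3)" shows "inM (x1 * f)"
proof -
  from assms(2) obtain c0 c1 c2 c3 d0 d1 d2 d3 where A: "c0 \<in> Aalg" "c1 \<in> Aalg" "c2 \<in> Aalg" "c3 \<in> Aalg"
      "d0 \<in> Aalg" "d1 \<in> Aalg" "d2 \<in> Aalg" "d3 \<in> Aalg" and f: "f = rep c0 c1 c2 c3 d0 d1 d2 d3"
    by (rule inM_E)
  define u :: "'k mpoly3" where "u = qq + x3^2"
  define v :: "'k mpoly3" where "v = x3 * qq"
  have e: "x1 * f = rep (normx1*c3) (c0 - v*c3) (c1 - u*c3) c2 (normx1*d3) (d0 - v*d3) (d1 - u*d3) d2"
    unfolding f rep_def N_expl[OF ch] u_def v_def by (simp add: algebra_simps power2_eq_square power3_eq_cube power4_eq_xxxx)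
  have u: "u \<in> Aalg" unfolding u_def by (rule Aalg_add[OF Aalg_qq Aalg_power[OF Aalg_x3]])
  have v: "v \<in> Aalg" unfolding v_def by (rule Aalg_mult[OF Aalg_x3 Aalg_qq])
  show ?thesis
    by (rule inM_intro[OF Aalg_mult[OF Aalg_N A(4)] Aalg_diff[OF A(1) Aalg_mult[OF v A(4)]]
      Aalg_diff[OF A(2) Aalg_mult[OF u A(4)]] A(3) Aalg_mult[OF Aalg_N A(8)] Aalg_diff[OF A(5) Aalg_mult[OF v A(8)]]
      Aalg_diff[OF A(6) Aalg_mult[OF u A(8)]] A(7) e])
qed

lemma inM_mult_const3:
  assumes "inM f" shows "inM ([:[:s:]:] * f)"
proof (induct s)
  case 0 then show ?case by (simp add: inM_0)
next
  case (pCons c u)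
  have e0: "[:[:pCons c u:]:] = const3 c + x3 * [:[:u:]:]"
    by (simp add: const3_def x3_def)
  have e: "[:[:pCons c u:]:] * f = const3 c * f + x3 * ([:[:u:]:] * f)"
    unfolding e0 by (simp only: distrib_right mult.assoc)
  show ?case unfolding e
    by (intro inM_add inM_smul Aalg_const Aalg_x3 assms pCons(2))
qed

lemma inM_mult_const2:
  assumes "inM f" shows "inM ([:r:] * f)"
proof (induct r)
  case 0 then show ?case by (simp add: inM_0)
next
  case (pCons s t)
  have e0: "[:pCons s t:] = [:[:s:]:] + x2 * [:t:]"
    by (simp add: x2_def)
  have e: "[:pCons s t:] * f = [:[:s:]:] * f + x2 * ([:t:] * f)"
    unfolding e0 by (simp only: distrib_right mult.assoc)
  show ?case unfolding e
    by (intro inM_add inM_x2 inM_mult_const3 assms pCons(2))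
qed

lemma inM_all:
  assumes ch: "CHAR('k::field) = 2"
  shows "inM (g :: 'k mpoly3)"
proof -
  have "inM (g * 1)"
  proof (induct g)
    case 0 then show ?case by (simp add: inM_0)
  next
    case (pCons r h)
    have e: "pCons r h * 1 = [:r:] * 1 + x1 * (h * 1)"
      by (simp add: x1_def)
    show ?case unfolding e
      by (intro inM_add inM_x1[OF ch] inM_mult_const2 inM_1 pCons(2))
  qed
  then show ?thesis by simp
qed


lemma gen_uniq:
  fixes N :: "'a::idom poly"
  assumes lc: "lead_coeff N = 1" and dg: "degree N = n" and n0: "0 < n"
    and sum0: "(\<Sum>a<n. [:0, 1:] ^ a * pcompose (F a) N) = 0"
  shows "\<forall>a<n. F a = 0"
proof (rule ccontr)
  assume "\<not> (\<forall>a<n. F a = 0)"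
  define S where "S = {a. a < n \<and> F a \<noteq> 0}"
  have Sne: "S \<noteq> {}" using \<open>\<not> (\<forall>a<n. F a = 0)\<close> by (auto simp: S_def)
  have Sfin: "finite S" by (simp add: S_def)
  define dd where "dd a = a + n * degree (F a)" for a
  define D where "D = Max (dd ` S)"
  have "D \<in> dd ` S" unfolding D_def by (rule Max_in) (simp_all add: Sfin Sne)
  then obtain a0 where a0S: "a0 \<in> S" and Da0: "dd a0 = D" by auto
  have Dge: "dd a \<le> D" if "a \<in> S" for a unfolding D_def by (rule Max_ge) (simp_all add: Sfin that)
  have m1: "[:0, 1:] ^ a = (monom 1 a :: 'a poly)" for a by (simp add: monom_altdef)
  have degN: "degree N > 0" using dg n0 by simp
  have lcF: "lead_coeff (pcompose (F a) N) = lead_coeff (F a)" for a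
    using lead_coeff_comp[OF degN, of "F a"] lc by simp
  have pc_nz: "pcompose (F a) N \<noteq> 0" if "F a \<noteq> 0" for a
    using lcF[of a] that by (metis leading_coeff_0_iff)
  have deg_pc: "degree (pcompose (F a) N) = n * degree (F a)" for a
    using degree_pcompose[of "F a" N] dg by simp
  have deg_term: "degree (monom 1 a * pcompose (F a) N) = dd a" if "F a \<noteq> 0" for a
    using pc_nz[OF that] by (simp add: degree_mult_eq degree_monom_eq deg_pc dd_def)
  have lead: "coeff (monom 1 a0 * pcompose (F a0) N) D = lead_coeff (F a0)"
  proof -
    have "coeff (monom 1 a0 * pcompose (F a0) N) D = coeff (pcompose (F a0) N) (D - a0)"
      using Da0 by (simp add: coeff_monom_mult dd_def)
    also have "D - a0 = degree (pcompose (F a0) N)" using Da0 by (simp add: dd_def deg_pc)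
    finally show ?thesis using lcF by simp
  qed
  have others: "coeff (monom 1 a * pcompose (F a) N) D = 0" if "a < n" "a \<noteq> a0" for a
  proof (cases "F a = 0")
    case True then show ?thesis by simp
  next
    case False
    then have aS: "a \<in> S" using that by (simp add: S_def)
    have "dd a \<noteq> D"
    proof
      assume "dd a = D"
      then have "dd a mod n = dd a0 mod n" using Da0 by simp
      moreover have "dd a mod n = a" using that by (simp add: dd_def)
      moreover have "dd a0 mod n = a0" using a0S by (simp add: dd_def S_def)
      ultimately show False using that by simp
    qed
    then have "dd a < D" using Dge[OF aS] by simp
    then show ?thesis using deg_term[OF False] by (simp add: coeff_eq_0)
  qed
  have a0n: "a0 \<in> {..<n}" using a0S by (simp add: S_def)
  have "coeff (\<Sum>a<n. monom 1 a * pcompose (F a) N) D = (\<Sum>a<n. coeff (monom 1 a * pcompose (F a) N) D)"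
    by (simp add: coeff_sum)
  also have "\<dots> = coeff (monom 1 a0 * pcompose (F a0) N) D + (\<Sum>a\<in>{..<n} - {a0}. coeff (monom 1 a * pcompose (F a) N) D)"
    using a0n by (simp add: sum.remove)
  also have "(\<Sum>a\<in>{..<n} - {a0}. coeff (monom 1 a * pcompose (F a) N) D) = 0"
    by (rule sum.neutral) (auto intro: others)
  finally have "coeff (\<Sum>a<n. monom 1 a * pcompose (F a) N) D = lead_coeff (F a0)" using lead by simp
  moreover have "(\<Sum>a<n. monom 1 a * pcompose (F a) N) = 0" using sum0 by (simp add: m1)
  ultimately have "lead_coeff (F a0) = 0" by simp
  then show False using a0S by (simp add: S_def)
qed


definition q2 :: "'k::field poly poly" where "q2 = [:0, [:0, 1:], 1:]"

lemma qq_q2: "qq = [:q2:]"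
  by (simp add: qq_def x2_def x3_def q2_def)

definition hq :: "'k::field poly poly \<Rightarrow> 'k poly poly" where "hq Q = pcompose Q q2"
definition phi :: "'k::field poly poly poly \<Rightarrow> 'k mpoly3" where
  "phi P = pcompose (map_poly hq P) normx1"

lemma hq_0: "hq 0 = 0" by (simp add: hq_def)
lemma hq_add: "hq (a + b) = hq a + hq b" by (simp add: hq_def pcompose_add)
lemma hq_mult: "hq (a * b) = hq a * hq b" by (simp add: hq_def pcompose_mult)
lemma hq_1: "hq 1 = 1" by (simp add: hq_def pcompose_1)

lemma phi_add: "phi (P + Q) = phi P + phi Q"
  unfolding phi_def by (simp add: map_poly_add_hom[of hq, OF hq_0 hq_add] pcompose_add)
lemma phi_mult: "phi (P * Q) = phi P * phi Q"
  unfolding phi_def by (simp add: map_poly_mult_hom[of hq, OF hq_0 hq_add hq_mult] pcompose_mult)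
lemma phi_0: "phi 0 = 0" by (simp add: phi_def)

lemma map_hq_pCons[simp]: "map_poly hq (pCons a p) = pCons (hq a) (map_poly hq p)"
  by (simp add: map_poly_pCons hq_0)

lemma phi_const: "phi [:[:[:c:]:]:] = const3 c"
  by (simp add: phi_def hq_def const3_def)
lemma phi_N: "phi [:0, 1:] = normx1"
  by (simp add: phi_def hq_0 hq_1 pcompose_pCons)
lemma phi_qq: "phi [:[:0, 1:]:] = qq"
  by (simp add: phi_def hq_def pcompose_pCons qq_q2)
lemma phi_x3: "phi [:[:[:0, 1:]:]:] = x3"
  by (simp add: phi_def hq_def x3_def)

lemma Aalg_phi: "a \<in> Aalg \<Longrightarrow> \<exists>P. a = phi P"
  unfolding Aalg_def
proof (induct rule: subalg.induct)
  case (const c) then show ?case using phi_const by metis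
next
  case (gen s)
  then have "s = normx1 \<or> s = qq \<or> s = x3" by (auto simp: qq_def)
  then show ?case by (metis phi_N phi_qq phi_x3)
next
  case (add a b) then show ?case using phi_add by metis
next
  case (mult a b) then show ?case using phi_mult by metis
qed

lemma N_shape:
  assumes "CHAR('k::field) = 2"
  shows "(normx1 :: 'k mpoly3) = [:0, [:[:0, 1:]:] * q2, q2 + [:[:0, 1:]:]^2, 0, 1:]"
  unfolding N_expl[OF assms] qq_q2 x3_def x1_def
  by (simp add: eval_nat_numeral poly_const_pow)


lemma lvl2:
  fixes Q0 Q1 :: "'k::field poly poly"
  assumes "pcompose Q0 q2 + [:0, 1:] * pcompose Q1 q2 = 0"
  shows "Q0 = 0 \<and> Q1 = 0"
proof -
  have lc: "lead_coeff (q2 :: 'k poly poly) = 1" and dg: "degree (q2 :: 'k poly poly) = 2"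
    by (simp_all add: q2_def)
  define F where "F a = (if a = 0 then Q0 else Q1)" for a :: nat
  have "(\<Sum>a<2. [:0, 1:] ^ a * pcompose (F a) q2) = pcompose Q0 q2 + [:0, 1:] * pcompose Q1 q2"
    by (simp add: numeral_2_eq_2 F_def)
  then have h: "\<forall>a<2. F a = 0" using gen_uniq[OF lc dg, of F] assms by simp
  have "F 0 = 0" "F 1 = 0" using h[rule_format, of 0] h[rule_format, of 1] by simp_all
  then show ?thesis by (simp add: F_def)
qed

lemma lvl1:
  fixes F0 F1 F2 F3 :: "'k::field poly poly poly"
  assumes ch: "CHAR('k) = 2"
    and "pcompose F0 normx1 + x1 * pcompose F1 normx1 + x1^2 * pcompose F2 normx1 + x1^3 * pcompose F3 normx1 = 0"
  shows "F0 = 0 \<and> F1 = 0 \<and> F2 = 0 \<and> F3 = 0"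
proof -
  have lc: "lead_coeff (normx1 :: 'k mpoly3) = 1" and dg: "degree (normx1 :: 'k mpoly3) = 4"
    by (simp_all add: N_shape[OF ch])
  define F where "F a = (if a = 0 then F0 else if a = 1 then F1 else if a = 2 then F2 else F3)" for a :: nat
  have "(\<Sum>a<4. [:0, 1:] ^ a * pcompose (F a) normx1) =
     pcompose F0 normx1 + x1 * pcompose F1 normx1 + x1^2 * pcompose F2 normx1 + x1^3 * pcompose F3 normx1"
    by (simp add: eval_nat_numeral F_def x1_def)
  then have h: "\<forall>a<4. F a = 0" using gen_uniq[OF lc dg, of F] assms by simp
  have "F 0 = 0" "F 1 = 0" "F 2 = 0" "F 3 = 0"
    using h[rule_format, of 0] h[rule_format, of 1] h[rule_format, of 2] h[rule_format, of 3] by simp_all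
  then show ?thesis by (simp add: F_def)
qed

lemma lvl2':
  fixes P Q :: "'k::field poly poly poly"
  assumes "map_poly hq P + smult [:0, 1:] (map_poly hq Q) = 0"
  shows "P = 0 \<and> Q = 0"
proof -
  have "coeff P i = 0 \<and> coeff Q i = 0" for i
  proof -
    have "coeff (map_poly hq P + smult [:0, 1:] (map_poly hq Q)) i = 0" using assms by simp
    then have "pcompose (coeff P i) q2 + [:0, 1:] * pcompose (coeff Q i) q2 = 0"
      by (simp add: coeff_map_poly hq_0 hq_def)
    then show ?thesis by (rule lvl2)
  qed
  then show ?thesis by (auto intro: poly_eqI)
qed

lemma phi_x2: "phi P + phi Q * x2 = pcompose (map_poly hq P + smult [:0, 1:] (map_poly hq Q)) normx1"
  by (simp add: phi_def pcompose_add pcompose_smult x2_def mult.commute)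

lemma rep_zero:
  assumes ch: "CHAR('k::field) = 2"
    and A: "c0 \<in> Aalg" "c1 \<in> Aalg" "c2 \<in> Aalg" "c3 \<in> Aalg"
      "d0 \<in> Aalg" "d1 \<in> Aalg" "d2 \<in> Aalg" "d3 \<in> Aalg"
    and z: "rep c0 c1 c2 c3 d0 d1 d2 d3 = (0 :: 'k mpoly3)"
  shows "c0 = 0 \<and> c1 = 0 \<and> c2 = 0 \<and> c3 = 0 \<and> d0 = 0 \<and> d1 = 0 \<and> d2 = 0 \<and> d3 = 0"
proof -
  obtain P0 where P0: "c0 = phi P0" using Aalg_phi[OF A(1)] by blast
  obtain P1 where P1: "c1 = phi P1" using Aalg_phi[OF A(2)] by blast
  obtain P2 where P2: "c2 = phi P2" using Aalg_phi[OF A(3)] by blast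
  obtain P3 where P3: "c3 = phi P3" using Aalg_phi[OF A(4)] by blast
  obtain Q0 where Q0: "d0 = phi Q0" using Aalg_phi[OF A(5)] by blast
  obtain Q1 where Q1: "d1 = phi Q1" using Aalg_phi[OF A(6)] by blast
  obtain Q2 where Q2: "d2 = phi Q2" using Aalg_phi[OF A(7)] by blast
  obtain Q3 where Q3: "d3 = phi Q3" using Aalg_phi[OF A(8)] by blast
  define G where "G P Q = map_poly hq P + smult [:0, 1:] (map_poly hq Q)" for P Q :: "'k poly poly poly"
  have "rep c0 c1 c2 c3 d0 d1 d2 d3 = (c0 + d0 * x2) + x1 * (c1 + d1 * x2) + x1^2 * (c2 + d2 * x2) + x1^3 * (c3 + d3 * x2)"
    unfolding rep_def by (simp add: algebra_simps)
  also have "\<dots> = pcompose (G P0 Q0) normx1 + x1 * pcompose (G P1 Q1) normx1 + x1^2 * pcompose (G P2 Q2) normx1 + x1^3 * pcompose (G P3 Q3) normx1"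
    unfolding P0 P1 P2 P3 Q0 Q1 Q2 Q3 G_def phi_x2 ..
  finally have "G P0 Q0 = 0 \<and> G P1 Q1 = 0 \<and> G P2 Q2 = 0 \<and> G P3 Q3 = 0"
    using lvl1[OF ch] z by metis
  then have "P0 = 0 \<and> Q0 = 0" "P1 = 0 \<and> Q1 = 0" "P2 = 0 \<and> Q2 = 0" "P3 = 0 \<and> Q3 = 0"
    unfolding G_def using lvl2' by blast+
  then show ?thesis using P0 P1 P2 P3 Q0 Q1 Q2 Q3 phi_0 by simp
qed


lemma T_rep:
  assumes ch: "CHAR('k::field) = 2"
    and A: "c0 \<in> Aalg" "c1 \<in> Aalg" "c2 \<in> Aalg" "c3 \<in> Aalg"
      "d0 \<in> Aalg" "d1 \<in> Aalg" "d2 \<in> Aalg" "d3 \<in> Aalg"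
  shows "(Delta ^^ 3) (rep c0 c1 c2 c3 d0 d1 d2 d3 :: 'k mpoly3) = d1 * x3^2 + d2 * x3^3 + c3 * (qq * x3)
     + d3 * (x3^4 + qq * x3^2 + (qq * x3) * x2 + x3^2 * x1^2 + x3^3 * x1)"
proof -
  have Tc: "(Delta ^^ 3) (c * m) = c * (Delta ^^ 3) m" if "c \<in> Aalg" for c m :: "'k mpoly3"
    using T_cmult[OF sigma_fix[OF ch that]] .
  have r: "rep c0 c1 c2 c3 d0 d1 d2 d3 = c0 * 1 + c1 * x1 + c2 * x1^2 + c3 * x1^3 + d0 * x2 + d1 * (x1 * x2) + d2 * (x1^2 * x2) + d3 * (x1^3 * x2)"
    by (simp add: rep_def)
  show ?thesis
    unfolding r T_add Tc[OF A(1)] Tc[OF A(2)] Tc[OF A(3)] Tc[OF A(4)] Tc[OF A(5)] Tc[OF A(6)] Tc[OF A(7)] Tc[OF A(8)]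
      T_1[OF ch] T_x1[OF ch] T_x1sq[OF ch] T_x1cu[OF ch] T_x2[OF ch] T_x1x2[OF ch] T_x1sqx2[OF ch] T_x1cux2[OF ch]
    by simp
qed

lemma combo_rep:
  assumes ch: "CHAR('k::field) = 2"
  shows "a0 + a1 * x1 + a2 * x2 + a3 * x1^2 + a4 * Delta (x1^3) + a5 * Delta (x1^3 * x2) =
    rep (a0 + a4 * (qq * x3) + a5 * qq^2) (a1 + a4 * qq) (a3 + a5 * qq) (a5 * x3)
        (a2 + a4 * (x3^2 + qq) + a5 * (qq * x3)) (a4 * x3 + a5 * qq) a4 (0 :: 'k mpoly3)"
  unfolding D3_expl[OF ch] D4_expl[OF ch] rep_def
  by (simp add: algebra_simps power2_eq_square power3_eq_cube)

lemma char2_neg: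
  assumes ch: "CHAR('k::field) = 2"
  shows "- (y :: 'k mpoly3) = y"
proof -
  have "y + y = 2 * y" by simp
  then have "y + y = 0" using two_zero[OF ch] by simp
  then show ?thesis by (simp add: add_eq_0_iff2)
qed

lemma x3_nz: "(x3 :: 'k::field mpoly3) \<noteq> 0"
  by (simp add: x3_def)

definition eps :: "'k::field mpoly3 \<Rightarrow> 'k mpoly3" where
  "eps = map_poly (map_poly (\<lambda>p. [:poly p 0:]))"

lemma e0_hom: "(\<lambda>p::'k::field poly. [:poly p 0:]) 0 = 0"
  "\<And>a b. (\<lambda>p::'k::field poly. [:poly p 0:]) (a + b) = (\<lambda>p. [:poly p 0:]) a + (\<lambda>p. [:poly p 0:]) b"
  "\<And>a b. (\<lambda>p::'k::field poly. [:poly p 0:]) (a * b) = (\<lambda>p. [:poly p 0:]) a * (\<lambda>p. [:poly p 0:]) b"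
  by simp_all

lemma e1_hom: "map_poly (\<lambda>p::'k::field poly. [:poly p 0:]) 0 = 0"
  "\<And>a b. map_poly (\<lambda>p::'k::field poly. [:poly p 0:]) (a + b) = map_poly (\<lambda>p. [:poly p 0:]) a + map_poly (\<lambda>p. [:poly p 0:]) b"
  "\<And>a b. map_poly (\<lambda>p::'k::field poly. [:poly p 0:]) (a * b) = map_poly (\<lambda>p. [:poly p 0:]) a * map_poly (\<lambda>p. [:poly p 0:]) b"
  by (simp, rule map_poly_add_hom[OF e0_hom(1,2)], rule map_poly_mult_hom[OF e0_hom])

lemma eps_mult: "eps (a * b) = eps a * eps b"
  unfolding eps_def by (rule map_poly_mult_hom[OF e1_hom])

lemma eps_x3: "eps x3 = 0"
  by (simp add: eps_def x3_def map_poly_pCons)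

lemma eps_qq_nz: "eps (qq :: 'k::field mpoly3) \<noteq> 0"
proof
  assume h: "eps (qq :: 'k mpoly3) = 0"
  have "coeff (coeff (eps (qq :: 'k mpoly3)) 0) 2 = 1"
    by (simp add: eps_def qq_q2 q2_def coeff_map_poly numeral_2_eq_2)
  then show False using h by simp
qed

lemma x3_factor:
  fixes c :: "'k::field mpoly3"
  assumes "eps c = 0"
  shows "c = x3 * map_poly (map_poly (\<lambda>p. synthetic_div p 0)) c"
proof (rule poly_eqI)
  fix i
  show "coeff c i = coeff (x3 * map_poly (map_poly (\<lambda>p. synthetic_div p 0)) c) i"
  proof (rule poly_eqI)
    fix j
    have z: "poly (coeff (coeff c i) j) 0 = 0"
    proof -
      have "coeff (coeff (eps c) i) j = [:poly (coeff (coeff c i) j) 0:]"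
        by (simp add: eps_def coeff_map_poly)
      then show ?thesis using assms by simp
    qed
    have "[:0, 1:] * synthetic_div (coeff (coeff c i) j) 0 = coeff (coeff c i) j"
      using synthetic_div_correct'[of 0 "coeff (coeff c i) j"] z by simp
    then show "coeff (coeff c i) j = coeff (coeff (x3 * map_poly (map_poly (\<lambda>p. synthetic_div p 0)) c) i) j"
      by (simp add: x3_def coeff_map_poly)
  qed
qed


lemma x3_div:
  assumes ch: "CHAR('k::field) = 2" and c: "c \<in> Aalg" and eq: "c * qq = x3 * (h :: 'k mpoly3)"
  shows "\<exists>e \<in> Aalg. c = x3 * e"
proof -
  have "eps c * eps qq = eps (x3 * h)" using eq eps_mult[of c qq] by simp
  also have "\<dots> = 0" by (simp add: eps_mult eps_x3)
  finally have "eps c * eps qq = 0" .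
  moreover have "eps (qq :: 'k mpoly3) \<noteq> 0" by (rule eps_qq_nz)
  ultimately have "eps c = 0" by simp
  then have cg: "c = x3 * map_poly (map_poly (\<lambda>p. synthetic_div p 0)) c" by (rule x3_factor)
  obtain e0 e1 e2 e3 f0 f1 f2 f3 where A: "e0 \<in> Aalg" "e1 \<in> Aalg" "e2 \<in> Aalg" "e3 \<in> Aalg"
      "f0 \<in> Aalg" "f1 \<in> Aalg" "f2 \<in> Aalg" "f3 \<in> Aalg"
      and g: "map_poly (map_poly (\<lambda>p. synthetic_div p 0)) c = rep e0 e1 e2 e3 f0 f1 f2 f3"
    using inM_all[OF ch] by (rule inM_E)
  have "rep (c - x3 * e0) (- (x3 * e1)) (- (x3 * e2)) (- (x3 * e3)) (- (x3 * f0)) (- (x3 * f1)) (- (x3 * f2)) (- (x3 * f3)) = 0"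
    using cg unfolding g rep_def by (simp add: algebra_simps)
  from rep_zero[OF ch Aalg_diff[OF c Aalg_mult[OF Aalg_x3 A(1)]]
      Aalg_uminus[OF Aalg_mult[OF Aalg_x3 A(2)]] Aalg_uminus[OF Aalg_mult[OF Aalg_x3 A(3)]]
      Aalg_uminus[OF Aalg_mult[OF Aalg_x3 A(4)]] Aalg_uminus[OF Aalg_mult[OF Aalg_x3 A(5)]]
      Aalg_uminus[OF Aalg_mult[OF Aalg_x3 A(6)]] Aalg_uminus[OF Aalg_mult[OF Aalg_x3 A(7)]]
      Aalg_uminus[OF Aalg_mult[OF Aalg_x3 A(8)]] this]
  have "c - x3 * e0 = 0" by blast
  then show ?thesis using A(1) by auto
qed

theorem proposition4p18:
  assumes "CHAR('k::field) = 2"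
  shows "free_with_basis (Aalg :: 'k mpoly3 set) K3
           [1, x1, x2, x1 ^ 2, Delta (x1 ^ 3), Delta (x1 ^ 3 * x2)]"
proof -
  note ch = assms
  have x3nz: "(x3 :: 'k mpoly3) \<noteq> 0" by (rule x3_nz)
  define bs :: "'k mpoly3 list" where "bs = [1, x1, x2, x1 ^ 2, Delta (x1 ^ 3), Delta (x1 ^ 3 * x2)]"
  have len: "length bs = 6" by (simp add: bs_def)
  have sumeq: "(\<Sum>i<length bs. a i * bs ! i) = a 0 + a 1 * x1 + a 2 * x2 + a 3 * x1^2 + a 4 * Delta (x1^3) + a 5 * Delta (x1^3 * x2)" for a
    by (simp add: bs_def eval_nat_numeral)
  have six: "i = 0 \<or> i = 1 \<or> i = 2 \<or> i = 3 \<or> i = 4 \<or> i = 5" if "i < 6" for i :: nat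
    using that by auto
  have Ai: "a 0 \<in> Aalg" "a 1 \<in> Aalg" "a 2 \<in> Aalg" "a 3 \<in> Aalg" "a 4 \<in> Aalg" "a 5 \<in> Aalg"
    if "\<forall>i<length bs. a i \<in> Aalg" for a
    using that len by auto
  note cl = Aalg_add Aalg_mult Aalg_power Aalg_x3 Aalg_qq Aalg_0 Aalg_diff Aalg_uminus
  have span1: "(Delta ^^ 3) (\<Sum>i<length bs. a i * bs ! i) = 0" if "\<forall>i<length bs. a i \<in> Aalg" for a
  proof -
    note A = Ai[OF that]
    have "(Delta ^^ 3) (\<Sum>i<length bs. a i * bs ! i) = (a 4 * x3 + a 5 * qq) * x3^2 + a 4 * x3^3 + (a 5 * x3) * (qq * x3)
       + 0 * (x3^4 + qq * x3^2 + (qq * x3) * x2 + x3^2 * x1^2 + x3^3 * x1)"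
      unfolding sumeq combo_rep[OF ch]
      by (rule T_rep[OF ch]) (use A in \<open>auto intro!: cl\<close>)
    also have "\<dots> = 0"
      by (rule char2_eq[OF two_zero[OF ch], where c = "a 4 * x3^3 + a 5 * qq * x3^2"]) algebra
    finally show ?thesis .
  qed
  have span2: "\<exists>a. f = (\<Sum>i<length bs. a i * bs ! i) \<and> (\<forall>i<length bs. a i \<in> Aalg)" if f: "(Delta ^^ 3) f = 0" for f
  proof -
    obtain c0 c1 c2 c3 d0 d1 d2 d3 where A: "c0 \<in> Aalg" "c1 \<in> Aalg" "c2 \<in> Aalg" "c3 \<in> Aalg"
        "d0 \<in> Aalg" "d1 \<in> Aalg" "d2 \<in> Aalg" "d3 \<in> Aalg" and fr: "f = rep c0 c1 c2 c3 d0 d1 d2 d3"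
      using inM_all[OF ch] by (rule inM_E)
    have "d1 * x3^2 + d2 * x3^3 + c3 * (qq * x3) + d3 * (x3^4 + qq * x3^2 + (qq * x3) * x2 + x3^2 * x1^2 + x3^3 * x1) = 0"
      using f unfolding fr T_rep[OF ch A] .
    then have "rep (d1 * x3^2 + d2 * x3^3 + c3 * (qq * x3) + d3 * (x3^4 + qq * x3^2)) (d3 * x3^3) (d3 * x3^2) 0
        (d3 * (qq * x3)) 0 0 0 = 0"
      unfolding rep_def by (simp add: algebra_simps)
    from rep_zero[OF ch _ _ _ Aalg_0 _ Aalg_0 Aalg_0 Aalg_0 this]
    have z: "d1 * x3^2 + d2 * x3^3 + c3 * (qq * x3) + d3 * (x3^4 + qq * x3^2) = 0" "d3 * x3^2 = 0"
      using A by (auto intro!: cl)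
    have d3: "d3 = 0" using z(2) x3nz by simp
    have "x3 * (d1 * x3 + d2 * x3^2 + c3 * qq) = 0" using z(1) d3 by (simp add: algebra_simps power2_eq_square power3_eq_cube)
    then have r1: "d1 * x3 + d2 * x3^2 + c3 * qq = 0" using x3nz by simp
    then have "c3 * qq = x3 * (- (d1 + d2 * x3))" by (simp add: algebra_simps power2_eq_square eq_neg_iff_add_eq_0)
    then obtain e where e: "e \<in> Aalg" and c3: "c3 = x3 * e" using x3_div[OF ch A(4)] by blast
    have "x3 * (d1 + d2 * x3 + e * qq) = 0" using r1 unfolding c3 by (simp add: algebra_simps power2_eq_square)
    then have "d1 + d2 * x3 + e * qq = 0" using x3nz by simp
    then have "d1 = - (d2 * x3 + e * qq)" by (metis add.assoc eq_neg_iff_add_eq_0)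
    then have d1: "d1 = d2 * x3 + e * qq" using char2_neg[OF ch] by simp
    define a where "a i = [c0 - d2 * (qq * x3) - e * qq^2, c1 - d2 * qq, d0 - d2 * (x3^2 + qq) - e * (qq * x3), c2 - e * qq, d2, e] ! i" for i
    have "f = (\<Sum>i<length bs. a i * bs ! i)"
      unfolding sumeq combo_rep[OF ch] fr rep_def a_def c3 d1 d3 by (simp add: algebra_simps)
    moreover have "\<forall>i<length bs. a i \<in> Aalg"
    proof (intro allI impI)
      fix i assume "i < length bs"
      then have "i = 0 \<or> i = 1 \<or> i = 2 \<or> i = 3 \<or> i = 4 \<or> i = 5" using six len by simp
      then show "a i \<in> Aalg" unfolding a_def using A e by (auto intro!: cl)
    qed
    ultimately show ?thesis by blast
  qed
  have indep: "\<forall>i<length bs. a i = 0" if "\<forall>i<length bs. a i \<in> Aalg" and z: "(\<Sum>i<length bs. a i * bs ! i) = 0" for a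
  proof -
    note A = Ai[OF that(1)]
    have "rep (a 0 + a 4 * (qq * x3) + a 5 * qq^2) (a 1 + a 4 * qq) (a 3 + a 5 * qq) (a 5 * x3)
        (a 2 + a 4 * (x3^2 + qq) + a 5 * (qq * x3)) (a 4 * x3 + a 5 * qq) (a 4) 0 = 0"
      using z unfolding sumeq combo_rep[OF ch] .
    from rep_zero[OF ch _ _ _ _ _ _ A(5) Aalg_0 this]
    have r: "a 0 + a 4 * (qq * x3) + a 5 * qq^2 = 0" "a 1 + a 4 * qq = 0" "a 3 + a 5 * qq = 0" "a 5 * x3 = 0"
       "a 2 + a 4 * (x3^2 + qq) + a 5 * (qq * x3) = 0" "a 4 = 0"
      using A by (auto intro!: cl)
    have a5: "a 5 = 0" using r(4) x3nz by simp
    have "a 0 = 0" "a 1 = 0" "a 2 = 0" "a 3 = 0" using r a5 by simp_all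
    then show ?thesis using a5 r(6) six len by auto
  qed
  show ?thesis
    unfolding free_with_basis_def bs_def[symmetric]
  proof (intro conjI allI impI)
    show "K3 = {\<Sum>i<length bs. a i * bs ! i |a. \<forall>i<length bs. a i \<in> Aalg}"
    proof (intro set_eqI iffI)
      fix f :: "'k mpoly3" assume "f \<in> K3"
      then have "(Delta ^^ 3) f = 0" by (simp add: K3_def)
      then show "f \<in> {\<Sum>i<length bs. a i * bs ! i |a. \<forall>i<length bs. a i \<in> Aalg}"
        using span2 by blast
    next
      fix f :: "'k mpoly3" assume "f \<in> {\<Sum>i<length bs. a i * bs ! i |a. \<forall>i<length bs. a i \<in> Aalg}"
      then show "f \<in> K3" using span1 by (auto simp: K3_def)
    qed
  next
    fix a i
    assume "(\<forall>i<length bs. a i \<in> Aalg) \<and> (\<Sum>i<length bs. a i * bs ! i) = 0" and "i < length bs"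
    then show "a i = 0" using indep by blast
  qed
qed

end
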